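(* Let $I$ be a 1-absorbing primary hyperideal of $R$ that is not a primary hyperideal of $R$. Then $R$ is a local multiplicative hyperring.
   Context: Throughout, $R$ is a commutative multiplicative hyperring ($(R,+)$ abelian group, $\circ$ a commutative associative hyperoperation into nonempty subsets, $a\circ(b+c)\subseteq a\circ b+a\circ c$, $a\circ(-b)=(-a)\circ b=-(a\circ b)$; $A\circ B=\bigcup a\circ b$), with identity $1$ ($a\in a\circ 1$); $x$ is a unit if $1\in x\circ y$ for some $y$. All hyperideals are $\mathbf{C}$-hyperideals (for any finite product $A=r_1\circ\cdots\circ r_n$, $A\cap I\neq\emptyset\Rightarrow A\subseteq I$). $\sqrt I=\{r:r^n\subseteq I\text{ for some }n\}$. Primary hyperideal: nonzero proper $Q$ with $x\circ y\subseteq Q\Rightarrow x\in Q$ or $y\in\sqrt Q$. 1-absorbing primary hyperideal: proper $I$ such that for all nonunit $x,y,z$, $x\circ y\circ z\subseteq I$ implies $x\circ y\subseteq I$ or $z\in\sqrt I$. $R$ is local if it has a unique maximal hyperideal. *)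

theory Defs
  imports Main
begin

text \<open>A commutative multiplicative hyperring: the carrier is the whole type 'a,
  (R,+) is the abelian group structure of the type class ab_group_add, and
  M :: 'a => 'a => 'a set is the hyperoperation.\<close>

definition hset_mult :: "('a \<Rightarrow> 'a \<Rightarrow> 'a set) \<Rightarrow> 'a set \<Rightarrow> 'a set \<Rightarrow> 'a set" where
  "hset_mult M A B = (\<Union>a\<in>A. \<Union>b\<in>B. M a b)"

definition hset_plus :: "'a::ab_group_add set \<Rightarrow> 'a set \<Rightarrow> 'a set" where
  "hset_plus A B = {a + b | a b. a \<in> A \<and> b \<in> B}"

definition comm_mult_hyperring :: "('a::ab_group_add \<Rightarrow> 'a \<Rightarrow> 'a set) \<Rightarrow> bool" where
  "comm_mult_hyperring M \<longleftrightarrow>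
     (\<forall>a b. M a b \<noteq> {}) \<and>
     (\<forall>a b. M a b = M b a) \<and>
     (\<forall>a b c. hset_mult M (M a b) {c} = hset_mult M {a} (M b c)) \<and>
     (\<forall>a b c. M a (b + c) \<subseteq> hset_plus (M a b) (M a c)) \<and>
     (\<forall>a b. M a (- b) = uminus ` M a b \<and> M (- a) b = uminus ` M a b)"

definition hyperring_identity :: "('a \<Rightarrow> 'a \<Rightarrow> 'a set) \<Rightarrow> 'a \<Rightarrow> bool" where
  "hyperring_identity M e \<longleftrightarrow> (\<forall>a. a \<in> M a e)"

definition hunit :: "('a \<Rightarrow> 'a \<Rightarrow> 'a set) \<Rightarrow> 'a \<Rightarrow> 'a \<Rightarrow> bool" where
  "hunit M e x \<longleftrightarrow> (\<exists>y. e \<in> M x y)"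

fun hprod :: "('a \<Rightarrow> 'a \<Rightarrow> 'a set) \<Rightarrow> 'a list \<Rightarrow> 'a set" where
  "hprod M [] = {}"
| "hprod M [r] = {r}"
| "hprod M (r # rs) = hset_mult M {r} (hprod M rs)"

definition hpow :: "('a \<Rightarrow> 'a \<Rightarrow> 'a set) \<Rightarrow> 'a \<Rightarrow> nat \<Rightarrow> 'a set" where
  "hpow M r n = hprod M (replicate n r)"

definition hyperideal :: "('a::ab_group_add \<Rightarrow> 'a \<Rightarrow> 'a set) \<Rightarrow> 'a set \<Rightarrow> bool" where
  "hyperideal M I \<longleftrightarrow> I \<noteq> {} \<and> (\<forall>a\<in>I. \<forall>b\<in>I. a - b \<in> I) \<and> (\<forall>r. \<forall>a\<in>I. M r a \<subseteq> I)"

definition C_hyperideal :: "('a::ab_group_add \<Rightarrow> 'a \<Rightarrow> 'a set) \<Rightarrow> 'a set \<Rightarrow> bool" where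
  "C_hyperideal M I \<longleftrightarrow> hyperideal M I \<and>
     (\<forall>rs. rs \<noteq> [] \<longrightarrow> hprod M rs \<inter> I \<noteq> {} \<longrightarrow> hprod M rs \<subseteq> I)"

definition hradical :: "('a \<Rightarrow> 'a \<Rightarrow> 'a set) \<Rightarrow> 'a set \<Rightarrow> 'a set" where
  "hradical M I = {r. \<exists>n\<ge>1. hpow M r n \<subseteq> I}"

definition primary_hyperideal :: "('a::ab_group_add \<Rightarrow> 'a \<Rightarrow> 'a set) \<Rightarrow> 'a set \<Rightarrow> bool" where
  "primary_hyperideal M Q \<longleftrightarrow> hyperideal M Q \<and> Q \<noteq> {0} \<and> Q \<noteq> UNIV \<and>
     (\<forall>x y. M x y \<subseteq> Q \<longrightarrow> x \<in> Q \<or> y \<in> hradical M Q)"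

definition one_absorbing_primary_hyperideal ::
  "('a::ab_group_add \<Rightarrow> 'a \<Rightarrow> 'a set) \<Rightarrow> 'a \<Rightarrow> 'a set \<Rightarrow> bool" where
  "one_absorbing_primary_hyperideal M e I \<longleftrightarrow> hyperideal M I \<and> I \<noteq> UNIV \<and>
     (\<forall>x y z. \<not> hunit M e x \<longrightarrow> \<not> hunit M e y \<longrightarrow> \<not> hunit M e z \<longrightarrow>
        hprod M [x, y, z] \<subseteq> I \<longrightarrow> hprod M [x, y] \<subseteq> I \<or> z \<in> hradical M I)"

definition maximal_hyperideal :: "('a::ab_group_add \<Rightarrow> 'a \<Rightarrow> 'a set) \<Rightarrow> 'a set \<Rightarrow> bool" where
  "maximal_hyperideal M P \<longleftrightarrow> hyperideal M P \<and> P \<noteq> UNIV \<and>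
     (\<forall>J. hyperideal M J \<longrightarrow> P \<subseteq> J \<longrightarrow> J = P \<or> J = UNIV)"

definition local_hyperring :: "('a::ab_group_add \<Rightarrow> 'a \<Rightarrow> 'a set) \<Rightarrow> bool" where
  "local_hyperring M \<longleftrightarrow> (\<exists>!P. maximal_hyperideal M P)"

end

theory Submission
  imports Defs
begin

lemma assocM: assumes "comm_mult_hyperring M"
  shows "hset_mult M (M a b) {c} = hset_mult M {a} (M b c)"
proof -
  have h: "\<forall>a b c. hset_mult M (M a b) {c} = hset_mult M {a} (M b c)"
    using assms unfolding comm_mult_hyperring_def by (elim conjE) assumption
  show ?thesis by (rule h[rule_format])
qed

lemma distM: assumes "comm_mult_hyperring M"
  shows "M a (b + c) \<subseteq> hset_plus (M a b) (M a c)"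
proof -
  have h: "\<forall>a b c. M a (b + c) \<subseteq> hset_plus (M a b) (M a c)"
    using assms unfolding comm_mult_hyperring_def by (elim conjE) assumption
  show ?thesis by (rule h[rule_format])
qed

lemma assoc1:
  assumes "comm_mult_hyperring M" "z \<in> M a b" "w \<in> M z c"
  shows "\<exists>t\<in>M b c. w \<in> M a t"
proof -
  have "w \<in> hset_mult M (M a b) {c}" using assms(2,3) unfolding hset_mult_def by blast
  then have "w \<in> hset_mult M {a} (M b c)" using assocM[OF assms(1), of a b c] by simp
  then show ?thesis unfolding hset_mult_def by blast
qed

lemma assoc2:
  assumes "comm_mult_hyperring M" "t \<in> M b c" "w \<in> M a t"
  shows "\<exists>z\<in>M a b. w \<in> M z c"
proof -
  have "w \<in> hset_mult M {a} (M b c)" using assms(2,3) unfolding hset_mult_def by blast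
  then have "w \<in> hset_mult M (M a b) {c}" using assocM[OF assms(1), of a b c] by simp
  then show ?thesis unfolding hset_mult_def by blast
qed

lemma commM: assumes "comm_mult_hyperring M"
  shows "M a b = M b a"
proof -
  have h: "\<forall>a b. M a b = M b a"
    using assms unfolding comm_mult_hyperring_def by (elim conjE) assumption
  show ?thesis by (rule h[rule_format])
qed

lemma ideal_mult:
  assumes "hyperideal M I" "a \<in> I" "comm_mult_hyperring M"
  shows "M a r \<subseteq> I"
proof -
  have "M r a \<subseteq> I" using assms(1,2) unfolding hyperideal_def by blast
  then show ?thesis using commM[OF assms(3), of a r] by simp
qed

lemma ideal_zero: "hyperideal M I \<Longrightarrow> 0 \<in> I"
proof -
  assume h: "hyperideal M I"
  then obtain a where "a \<in> I" unfolding hyperideal_def by blast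
  then have "a - a \<in> I" using h unfolding hyperideal_def by blast
  then show "0 \<in> I" by simp
qed

lemma ideal_neg: "hyperideal M I \<Longrightarrow> a \<in> I \<Longrightarrow> - a \<in> I"
proof -
  assume h: "hyperideal M I" "a \<in> I"
  then have "0 - a \<in> I" using ideal_zero[OF h(1)] unfolding hyperideal_def by blast
  then show "- a \<in> I" by simp
qed

lemma ideal_add: "hyperideal M I \<Longrightarrow> a \<in> I \<Longrightarrow> b \<in> I \<Longrightarrow> a + b \<in> I"
proof -
  assume h: "hyperideal M I" "a \<in> I" "b \<in> I"
  then have "a - (- b) \<in> I" using ideal_neg[OF h(1) h(3)] unfolding hyperideal_def by blast
  then show "a + b \<in> I" by simp
qed

lemma unit_ideal:
  assumes "hyperideal M J" "hyperring_identity M e" "comm_mult_hyperring M"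
    "u \<in> J" "hunit M e u"
  shows "J = UNIV"
proof -
  obtain v where v: "e \<in> M u v" using assms(5) unfolding hunit_def by blast
  have eJ: "e \<in> J" using ideal_mult[OF assms(1) assms(4) assms(3)] v by blast
  have "r \<in> J" for r
  proof -
    have "r \<in> M r e" using assms(2) unfolding hyperring_identity_def by blast
    moreover have "M r e \<subseteq> J" using assms(1) eJ unfolding hyperideal_def by blast
    ultimately show ?thesis by blast
  qed
  then show ?thesis by blast
qed

lemma neg_nonunit:
  assumes "comm_mult_hyperring M" "\<not> hunit M e b"
  shows "\<not> hunit M e (- b)"
proof
  assume "hunit M e (- b)"
  then obtain y where "e \<in> M (- b) y" unfolding hunit_def by blast
  moreover have "\<forall>a b. M a (- b) = uminus ` M a b \<and> M (- a) b = uminus ` M a b"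
    using assms(1) unfolding comm_mult_hyperring_def by (elim conjE)
  ultimately have "e \<in> M b (- y)" by (metis image_iff)
  then show False using assms(2) unfolding hunit_def by blast
qed

lemma mult_nonunit:
  assumes "comm_mult_hyperring M" "\<not> hunit M e a" "z \<in> M r a"
  shows "\<not> hunit M e z"
proof
  assume "hunit M e z"
  then obtain y where y: "e \<in> M z y" unfolding hunit_def by blast
  have "z \<in> M a r" using assms(3) commM[OF assms(1), of r a] by simp
  then obtain t where "t \<in> M r y" "e \<in> M a t" using assoc1[OF assms(1) _ y] by blast
  then show False using assms(2) unfolding hunit_def by blast
qed

theorem mainTheorem6:
  fixes M :: "'a::ab_group_add \<Rightarrow> 'a \<Rightarrow> 'a set" and e :: 'a and I :: "'a set"
  assumes "comm_mult_hyperring M"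
    and "hyperring_identity M e"
    and "\<forall>J. hyperideal M J \<longrightarrow> C_hyperideal M J"
    and "one_absorbing_primary_hyperideal M e I"
    and "I \<noteq> {0}"
    and "\<not> primary_hyperideal M I"
  shows "local_hyperring M"
proof -
  note cm = assms(1)
  have hI: "hyperideal M I" and IU: "I \<noteq> UNIV"
    using assms(4) unfolding one_absorbing_primary_hyperideal_def by auto
  obtain x y where xy: "M x y \<subseteq> I" and xI: "x \<notin> I" and yr: "y \<notin> hradical M I"
  proof -
    have "\<not> (\<forall>x y. M x y \<subseteq> I \<longrightarrow> x \<in> I \<or> y \<in> hradical M I)"
      using assms(5,6) hI IU unfolding primary_hyperideal_def by simp
    then show ?thesis using that by blast
  qed
  have rad: "a \<in> I \<Longrightarrow> a \<in> hradical M I" for a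
    unfolding hradical_def hpow_def by (rule CollectI, rule exI[of _ 1]) auto
  have yI: "y \<notin> I" using rad yr by blast
  have inI: "M z w \<subseteq> I" if "z \<in> M a b" "M a b \<subseteq> I" for z w a b
    using ideal_mult[OF hI _ cm] that by blast
  have xn: "\<not> hunit M e x"
  proof
    assume "hunit M e x"
    then obtain w where w: "e \<in> M x w" unfolding hunit_def by blast
    have "y \<in> M y e" using assms(2) unfolding hyperring_identity_def by blast
    then obtain z where z: "z \<in> M y x" "y \<in> M z w"
      using assoc2[OF cm w] by blast
    have "M y x \<subseteq> I" using xy commM[OF cm, of y x] by simp
    then show False using inI[OF z(1)] z(2) yI by blast
  qed
  have yn: "\<not> hunit M e y"
  proof
    assume "hunit M e y"
    then obtain w where w: "e \<in> M y w" unfolding hunit_def by blast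
    have "x \<in> M x e" using assms(2) unfolding hyperring_identity_def by blast
    then obtain z where z: "z \<in> M x y" "x \<in> M z w"
      using assoc2[OF cm w] by blast
    then show False using inI[OF z(1) xy] z(2) xI by blast
  qed
  have cx: "M c x \<subseteq> I" if "\<not> hunit M e c" for c
  proof -
    have "hprod M [c, x, y] \<subseteq> I"
    proof
      fix w assume "w \<in> hprod M [c, x, y]"
      then obtain t where t: "t \<in> M x y" "w \<in> M c t" by (auto simp: hset_mult_def)
      have "t \<in> I" using t(1) xy by blast
      then have "M t c \<subseteq> I" by (rule ideal_mult[OF hI _ cm])
      then show "w \<in> I" using t(2) commM[OF cm, of c t] by blast
    qed
    moreover have "\<forall>x y z. \<not> hunit M e x \<longrightarrow> \<not> hunit M e y \<longrightarrow> \<not> hunit M e z \<longrightarrow>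
        hprod M [x, y, z] \<subseteq> I \<longrightarrow> hprod M [x, y] \<subseteq> I \<or> z \<in> hradical M I"
      using assms(4) unfolding one_absorbing_primary_hyperideal_def by (elim conjE)
    ultimately have "hprod M [c, x] \<subseteq> I \<or> y \<in> hradical M I"
      using that xn yn by simp
    then show ?thesis using yr by (simp add: hset_mult_def)
  qed
  have addn: "\<not> hunit M e (c + d)" if "\<not> hunit M e c" "\<not> hunit M e d" for c d
  proof
    assume "hunit M e (c + d)"
    then obtain v where v: "e \<in> M (c + d) v" unfolding hunit_def by blast
    have "M x (c + d) \<subseteq> I"
    proof
      fix q assume "q \<in> M x (c + d)"
      then have "q \<in> hset_plus (M x c) (M x d)" using distM[OF cm, of x c d] by blast
      then obtain a b where "q = a + b" "a \<in> M x c" "b \<in> M x d" unfolding hset_plus_def by blast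
      moreover have "M x c \<subseteq> I" "M x d \<subseteq> I" using cx[OF that(1)] cx[OF that(2)] commM[OF cm, of x c] commM[OF cm, of x d] by simp_all
      ultimately show "q \<in> I" using ideal_add[OF hI] by blast
    qed
    have "x \<in> M x e" using assms(2) unfolding hyperring_identity_def by blast
    then obtain z where z: "z \<in> M x (c + d)" "x \<in> M z v"
      using assoc2[OF cm v] by blast
    then show False using inI[OF z(1) \<open>M x (c + d) \<subseteq> I\<close>] xI by blast
  qed
  define N where "N = {a. \<not> hunit M e a}"
  have Nmem: "a \<in> N \<longleftrightarrow> \<not> hunit M e a" for a by (simp add: N_def)
  have hN: "hyperideal M N"
    unfolding hyperideal_def
  proof (intro conjI ballI allI)
    have "x \<in> N" using xn Nmem by simp
    then show "N \<noteq> {}" by blast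
  next
    fix a b assume "a \<in> N" "b \<in> N"
    then have "\<not> hunit M e a" "\<not> hunit M e (- b)" using neg_nonunit[OF cm, of e b] Nmem by simp_all
    then have "\<not> hunit M e (a + - b)" by (rule addn)
    then show "a - b \<in> N" using Nmem by simp
  next
    fix r a assume "a \<in> N"
    then have a: "\<not> hunit M e a" using Nmem by simp
    show "M r a \<subseteq> N"
    proof
      fix z assume "z \<in> M r a"
      then have "\<not> hunit M e z" by (rule mult_nonunit[OF cm a])
      then show "z \<in> N" using Nmem by simp
    qed
  qed
  have eu: "hunit M e e" using assms(2) unfolding hunit_def hyperring_identity_def by blast
  have NU: "N \<noteq> UNIV"
  proof
    assume "N = UNIV"
    then have "e \<in> N" by simp
    then show False using eu Nmem by simp
  qed
  have sub: "P \<subseteq> N" if "hyperideal M P" "P \<noteq> UNIV" for P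
  proof
    fix u assume u: "u \<in> P"
    show "u \<in> N"
    proof (rule ccontr)
      assume "u \<notin> N"
      then have "hunit M e u" using Nmem by simp
      then have "P = UNIV" by (rule unit_ideal[OF that(1) assms(2) cm u])
      then show False using that(2) by simp
    qed
  qed
  have mN: "maximal_hyperideal M N"
    unfolding maximal_hyperideal_def
  proof (intro conjI allI impI hN NU)
    fix J assume J: "hyperideal M J" "N \<subseteq> J"
    show "J = N \<or> J = UNIV"
    proof (cases "J = UNIV")
      case False
      then have "J \<subseteq> N" by (rule sub[OF J(1)])
      then show ?thesis using J(2) by simp
    qed simp
  qed
  show ?thesis unfolding local_hyperring_def
  proof (rule ex1I[of _ N])
    fix P assume "maximal_hyperideal M P"
    then have P: "hyperideal M P" "P \<noteq> UNIV" "\<forall>J. hyperideal M J \<longrightarrow> P \<subseteq> J \<longrightarrow> J = P \<or> J = UNIV"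
      unfolding maximal_hyperideal_def by simp_all
    have "P \<subseteq> N" by (rule sub[OF P(1) P(2)])
    then have "N = P \<or> N = UNIV" using P(3) hN by simp
    then show "P = N" using NU by simp
  qed (rule mN)
qed

end
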